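(* Let $R$ be a complete discrete valuation ring of characteristic $p>0$ with uniformizer $\pi$, field of fractions $K$, and normalized valuation $v_K$. Let $H$ be a primitively generated $K$-Hopf algebra of rank $p^n$, let $t_1,\dots,t_n$ be a $K$-basis of $\mathrm{Prim}(H)$ and $B$ the associated matrix. Let $H_0$ be an $R$-Hopf order in $H$. Then there exist an $R$-basis of $\mathrm{Prim}(H_0)$, with associated matrix $A\in M_n(R)$, and a matrix $\Theta=(\theta_{i,j})\in\mathrm{GL}_n(K)$ such that (1) $\Theta$ is lower triangular; (2) $v_K(\theta_{i,i})\ge v_K(\theta_{i,j})$ for all $j\le i\le n$; (3) $\theta_{i,i}=\pi^{v_K(\theta_{i,i})}$ for all $i$; (4) $\Theta A=B\Theta^{(p)}$, where $\Theta^{(p)}=(\theta_{i,j}^p)$.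
   Context: All Hopf algebras are commutative, cocommutative, finitely generated projective, of $p$-power rank. $t$ is primitive if $\Delta(t)=t\otimes1+1\otimes t$; $\mathrm{Prim}(H)$ is the module of primitives; $H$ is primitively generated if generated as an algebra by its primitives (an $R$-Hopf order in a primitively generated $K$-Hopf algebra is primitively generated, with $\mathrm{Prim}$ free). For a basis $s_1,\dots,s_n$ of primitives, the associated matrix $(a_{j,i})$ is defined by $s_i^p=\sum_j a_{j,i}s_j$. An $R$-Hopf order in $H$ is a finitely generated projective $R$-submodule $H_0\subseteq H$ which is an $R$-Hopf algebra under the inherited operations with $KH_0=H$. *)

theory Defs
  imports "HOL-Computational_Algebra.Primes"
begin

text \<open>A valuation v : K^* \<rightarrow> Z (its value at 0 is irrelevant; v(0) = infinity
  is handled by explicit nonzeroness guards).  R is the valuation ring.\<close>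

definition normalized_discrete_valuation :: "('k::field \<Rightarrow> int) \<Rightarrow> bool" where
  "normalized_discrete_valuation v \<longleftrightarrow>
     (\<forall>x y. x \<noteq> 0 \<longrightarrow> y \<noteq> 0 \<longrightarrow> v (x * y) = v x + v y) \<and>
     (\<forall>x y. x \<noteq> 0 \<longrightarrow> y \<noteq> 0 \<longrightarrow> x + y \<noteq> 0 \<longrightarrow> min (v x) (v y) \<le> v (x + y)) \<and>
     (\<forall>z. \<exists>x. x \<noteq> 0 \<and> v x = z)"

definition val_ring :: "('k::field \<Rightarrow> int) \<Rightarrow> 'k set" where
  "val_ring v = {x. x = 0 \<or> 0 \<le> v x}"

definition val_complete :: "('k::field \<Rightarrow> int) \<Rightarrow> bool" where
  "val_complete v \<longleftrightarrow>
     (\<forall>x :: nat \<Rightarrow> 'k.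
        (\<forall>N::int. \<exists>M. \<forall>m\<ge>M. \<forall>m'\<ge>M. x m - x m' = 0 \<or> N \<le> v (x m - x m')) \<longrightarrow>
        (\<exists>L. \<forall>N::int. \<exists>M. \<forall>m\<ge>M. x m - L = 0 \<or> N \<le> v (x m - L)))"

definition complete_dvr_char_p :: "('k::field \<Rightarrow> int) \<Rightarrow> 'k \<Rightarrow> nat \<Rightarrow> bool" where
  "complete_dvr_char_p v \<pi> p \<longleftrightarrow>
     normalized_discrete_valuation v \<and> val_complete v \<and>
     \<pi> \<noteq> 0 \<and> v \<pi> = 1 \<and> prime p \<and> of_nat p = (0::'k)"

text \<open>H is K^I for a finite index type I (basis e_i); H \<otimes> H is K^(I\<times>I)
  (basis e_i \<otimes> e_j).  mu = multiplication constants, u = unit, D = comultiplication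
  constants, e = counit, S = antipode matrix.\<close>

definition ev :: "'i \<Rightarrow> 'i \<Rightarrow> 'k::field" where
  "ev i = (\<lambda>j. if j = i then 1 else 0)"

definition hmul :: "('i::finite \<Rightarrow> 'i \<Rightarrow> 'i \<Rightarrow> 'k::field) \<Rightarrow> ('i \<Rightarrow> 'k) \<Rightarrow> ('i \<Rightarrow> 'k) \<Rightarrow> ('i \<Rightarrow> 'k)" where
  "hmul mu x y = (\<lambda>k. \<Sum>i\<in>UNIV. \<Sum>j\<in>UNIV. x i * y j * mu i j k)"

definition comul :: "('i::finite \<Rightarrow> 'i \<Rightarrow> 'i \<Rightarrow> 'k::field) \<Rightarrow> ('i \<Rightarrow> 'k) \<Rightarrow> ('i \<Rightarrow> 'i \<Rightarrow> 'k)" where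
  "comul D x = (\<lambda>i j. \<Sum>k\<in>UNIV. x k * D k i j)"

definition counit :: "('i::finite \<Rightarrow> 'k::field) \<Rightarrow> ('i \<Rightarrow> 'k) \<Rightarrow> 'k" where
  "counit e x = (\<Sum>k\<in>UNIV. x k * e k)"

definition antipode :: "('i::finite \<Rightarrow> 'i \<Rightarrow> 'k::field) \<Rightarrow> ('i \<Rightarrow> 'k) \<Rightarrow> ('i \<Rightarrow> 'k)" where
  "antipode S x = (\<lambda>j. \<Sum>k\<in>UNIV. x k * S k j)"

definition tensor :: "('i \<Rightarrow> 'k::field) \<Rightarrow> ('i \<Rightarrow> 'k) \<Rightarrow> ('i \<Rightarrow> 'i \<Rightarrow> 'k)" where
  "tensor x y = (\<lambda>i j. x i * y j)"

text \<open>Multiplication on H \<otimes> H: (a\<otimes>b)(c\<otimes>d) = ac \<otimes> bd.\<close>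
definition tmul :: "('i::finite \<Rightarrow> 'i \<Rightarrow> 'i \<Rightarrow> 'k::field) \<Rightarrow> ('i \<Rightarrow> 'i \<Rightarrow> 'k) \<Rightarrow> ('i \<Rightarrow> 'i \<Rightarrow> 'k) \<Rightarrow> ('i \<Rightarrow> 'i \<Rightarrow> 'k)" where
  "tmul mu T1 T2 = (\<lambda>k l. \<Sum>i\<in>UNIV. \<Sum>j\<in>UNIV. \<Sum>i'\<in>UNIV. \<Sum>j'\<in>UNIV.
       T1 i j * T2 i' j' * mu i i' k * mu j j' l)"

fun hpow :: "('i::finite \<Rightarrow> 'i \<Rightarrow> 'i \<Rightarrow> 'k::field) \<Rightarrow> ('i \<Rightarrow> 'k) \<Rightarrow> ('i \<Rightarrow> 'k) \<Rightarrow> nat \<Rightarrow> ('i \<Rightarrow> 'k)" where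
  "hpow mu u x 0 = u"
| "hpow mu u x (Suc m) = hmul mu x (hpow mu u x m)"

definition comm_cocomm_hopf_algebra ::
  "('i::finite \<Rightarrow> 'i \<Rightarrow> 'i \<Rightarrow> 'k::field) \<Rightarrow> ('i \<Rightarrow> 'k) \<Rightarrow> ('i \<Rightarrow> 'i \<Rightarrow> 'i \<Rightarrow> 'k)
    \<Rightarrow> ('i \<Rightarrow> 'k) \<Rightarrow> ('i \<Rightarrow> 'i \<Rightarrow> 'k) \<Rightarrow> bool" where
  "comm_cocomm_hopf_algebra mu u D e S \<longleftrightarrow>
     \<comment> \<open>commutative associative unital K-algebra\<close>
     (\<forall>x y z. hmul mu (hmul mu x y) z = hmul mu x (hmul mu y z)) \<and>
     (\<forall>x y. hmul mu x y = hmul mu y x) \<and>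
     (\<forall>x. hmul mu u x = x) \<and>
     \<comment> \<open>coassociative, cocommutative, counital coalgebra\<close>
     (\<forall>k i j l. (\<Sum>a\<in>UNIV. D k a l * D a i j) = (\<Sum>b\<in>UNIV. D k i b * D b j l)) \<and>
     (\<forall>k i j. D k i j = D k j i) \<and>
     (\<forall>k j. (\<Sum>i\<in>UNIV. e i * D k i j) = (if k = j then 1 else 0)) \<and>
     (\<forall>k i. (\<Sum>j\<in>UNIV. e j * D k i j) = (if k = i then 1 else 0)) \<and>
     \<comment> \<open>comultiplication and counit are algebra homomorphisms\<close>
     (\<forall>x y. comul D (hmul mu x y) = tmul mu (comul D x) (comul D y)) \<and>
     comul D u = tensor u u \<and>
     (\<forall>x y. counit e (hmul mu x y) = counit e x * counit e y) \<and>
     counit e u = 1 \<and>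
     \<comment> \<open>antipode: m (S \<otimes> id) \<Delta> = m (id \<otimes> S) \<Delta> = u \<epsilon>\<close>
     (\<forall>x. (\<lambda>l. \<Sum>i\<in>UNIV. \<Sum>j\<in>UNIV. comul D x i j * hmul mu (antipode S (ev i)) (ev j) l)
          = (\<lambda>l. counit e x * u l)) \<and>
     (\<forall>x. (\<lambda>l. \<Sum>i\<in>UNIV. \<Sum>j\<in>UNIV. comul D x i j * hmul mu (ev i) (antipode S (ev j)) l)
          = (\<lambda>l. counit e x * u l))"

definition primitive :: "('i::finite \<Rightarrow> 'i \<Rightarrow> 'i \<Rightarrow> 'k::field) \<Rightarrow> ('i \<Rightarrow> 'k) \<Rightarrow> ('i \<Rightarrow> 'k) \<Rightarrow> bool" where
  "primitive D u x \<longleftrightarrow> comul D x = (\<lambda>i j. x i * u j + u i * x j)"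

definition Prim :: "('i::finite \<Rightarrow> 'i \<Rightarrow> 'i \<Rightarrow> 'k::field) \<Rightarrow> ('i \<Rightarrow> 'k) \<Rightarrow> ('i \<Rightarrow> 'k) set" where
  "Prim D u = {x. primitive D u x}"

inductive_set alg_gen :: "('i::finite \<Rightarrow> 'i \<Rightarrow> 'i \<Rightarrow> 'k::field) \<Rightarrow> ('i \<Rightarrow> 'k) \<Rightarrow> ('i \<Rightarrow> 'k) set \<Rightarrow> ('i \<Rightarrow> 'k) set"
  for mu u X where
  gen_unit: "u \<in> alg_gen mu u X"
| gen_base: "x \<in> X \<Longrightarrow> x \<in> alg_gen mu u X"
| gen_add: "x \<in> alg_gen mu u X \<Longrightarrow> y \<in> alg_gen mu u X \<Longrightarrow> (\<lambda>k. x k + y k) \<in> alg_gen mu u X"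
| gen_smult: "x \<in> alg_gen mu u X \<Longrightarrow> (\<lambda>k. c * x k) \<in> alg_gen mu u X"
| gen_mul: "x \<in> alg_gen mu u X \<Longrightarrow> y \<in> alg_gen mu u X \<Longrightarrow> hmul mu x y \<in> alg_gen mu u X"

definition primitively_generated where
  "primitively_generated mu u D \<longleftrightarrow> alg_gen mu u (Prim D u) = UNIV"

definition lincomb :: "nat \<Rightarrow> (nat \<Rightarrow> 'k::field) \<Rightarrow> (nat \<Rightarrow> 'i \<Rightarrow> 'k) \<Rightarrow> ('i \<Rightarrow> 'k)" where
  "lincomb r c b = (\<lambda>k. \<Sum>l<r. c l * b l k)"

definition is_basis_over :: "'k::field set \<Rightarrow> nat \<Rightarrow> (nat \<Rightarrow> 'i \<Rightarrow> 'k) \<Rightarrow> ('i \<Rightarrow> 'k) set \<Rightarrow> bool" where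
  "is_basis_over C r b X \<longleftrightarrow>
     (\<forall>l<r. b l \<in> X) \<and>
     (\<forall>c. (\<forall>l<r. c l \<in> C) \<longrightarrow> lincomb r c b = (\<lambda>_. 0) \<longrightarrow> (\<forall>l<r. c l = 0)) \<and>
     X = {lincomb r c b | c. \<forall>l<r. c l \<in> C}"

text \<open>An R-Hopf order: a finitely generated projective (over the DVR R: free of finite
  rank) R-submodule H0 of H, closed under the inherited Hopf operations
  (\<Delta>(H0) inside the image of H0 \<otimes>_R H0 in H \<otimes>_K H), with K H0 = H.\<close>
definition hopf_order ::
  "('k::field \<Rightarrow> int) \<Rightarrow> ('i::finite \<Rightarrow> 'i \<Rightarrow> 'i \<Rightarrow> 'k) \<Rightarrow> ('i \<Rightarrow> 'k) \<Rightarrow> ('i \<Rightarrow> 'i \<Rightarrow> 'i \<Rightarrow> 'k)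
    \<Rightarrow> ('i \<Rightarrow> 'k) \<Rightarrow> ('i \<Rightarrow> 'i \<Rightarrow> 'k) \<Rightarrow> ('i \<Rightarrow> 'k) set \<Rightarrow> bool" where
  "hopf_order v mu u D e S H0 \<longleftrightarrow>
     (\<exists>r b. is_basis_over (val_ring v) r b H0) \<and>
     u \<in> H0 \<and>
     (\<forall>x\<in>H0. \<forall>y\<in>H0. hmul mu x y \<in> H0) \<and>
     (\<forall>x\<in>H0. counit e x \<in> val_ring v) \<and>
     (\<forall>x\<in>H0. antipode S x \<in> H0) \<and>
     (\<forall>x\<in>H0. \<exists>(r::nat) c y z. (\<forall>l<r. c l \<in> val_ring v \<and> y l \<in> H0 \<and> z l \<in> H0) \<and>
        comul D x = (\<lambda>i j. \<Sum>l<r. c l * y l i * z l j)) \<and>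
     (\<forall>x. \<exists>r c b. (\<forall>l<r. b l \<in> H0) \<and> x = lincomb r c b)"

end

theory Submission
  imports Defs "HOL-Library.Function_Algebras" "HOL.Vector_Spaces"
begin


definition vge :: "('k::field \<Rightarrow> int) \<Rightarrow> int \<Rightarrow> 'k \<Rightarrow> bool" where
  "vge v N x \<longleftrightarrow> x = 0 \<or> N \<le> v x"

locale dval =
  fixes v :: "'k::field \<Rightarrow> int"
  assumes nv: "normalized_discrete_valuation v"
begin

lemma vmult: "x \<noteq> 0 \<Longrightarrow> y \<noteq> 0 \<Longrightarrow> v (x * y) = v x + v y"
  using nv unfolding normalized_discrete_valuation_def by blast

lemma vadd: "x \<noteq> 0 \<Longrightarrow> y \<noteq> 0 \<Longrightarrow> x + y \<noteq> 0 \<Longrightarrow> min (v x) (v y) \<le> v (x + y)"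
  using nv unfolding normalized_discrete_valuation_def by blast

lemma v1: "v 1 = 0"
  using vmult[of 1 1] by simp

lemma vm1: "v (-1) = 0"
  using vmult[of "-1" "-1"] v1 by simp

lemma vneg: "v (- x) = v x"
proof (cases "x = 0")
  case False
  then show ?thesis using vmult[of "-1" x] vm1 by simp
qed simp

lemma vinv: "x \<noteq> 0 \<Longrightarrow> v (inverse x) = - v x"
  using vmult[of x "inverse x"] v1 by simp

lemma vdiv: "x \<noteq> 0 \<Longrightarrow> y \<noteq> 0 \<Longrightarrow> v (x / y) = v x - v y"
  using vmult[of x "inverse y"] vinv[of y] by (simp add: divide_inverse)

lemma vpow: "x \<noteq> 0 \<Longrightarrow> v (x ^ m) = int m * v x"
  by (induction m) (auto simp: vmult v1 algebra_simps)

lemma vpowi: "x \<noteq> 0 \<Longrightarrow> v (x powi k) = k * v x"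
proof (cases "k \<ge> 0")
  case True
  assume x: "x \<noteq> 0"
  have "x powi k = x ^ nat k" using True by (simp add: power_int_def)
  then show ?thesis using vpow[OF x, of "nat k"] True by simp
next
  case False
  assume x: "x \<noteq> 0"
  have "x powi k = inverse (x ^ nat (-k))" using False by (simp add: power_int_def power_inverse)
  then show ?thesis using vpow[OF x, of "nat (-k)"] False vinv[of "x ^ nat (-k)"] x by simp
qed

lemma vge_0[simp]: "vge v N 0" by (simp add: vge_def)

lemma vge_mono: "vge v N x \<Longrightarrow> M \<le> N \<Longrightarrow> vge v M x"
  by (auto simp: vge_def)

lemma vge_add: "vge v N x \<Longrightarrow> vge v N y \<Longrightarrow> vge v N (x + y)"
proof -
  assume a: "vge v N x" "vge v N y"
  show ?thesis
  proof (cases "x = 0 \<or> y = 0 \<or> x + y = 0")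
    case True then show ?thesis using a by (auto simp: vge_def)
  next
    case False
    then have "min (v x) (v y) \<le> v (x + y)" using vadd by blast
    then show ?thesis using a False by (auto simp: vge_def)
  qed
qed

lemma vge_neg: "vge v N x \<Longrightarrow> vge v N (- x)"
  by (auto simp: vge_def vneg)

lemma vge_diff: "vge v N x \<Longrightarrow> vge v N y \<Longrightarrow> vge v N (x - y)"
  using vge_add[of N x "-y"] vge_neg[of N y] by simp

lemma vge_mult: "vge v N x \<Longrightarrow> vge v M y \<Longrightarrow> vge v (N + M) (x * y)"
proof -
  assume a: "vge v N x" "vge v M y"
  show ?thesis
  proof (cases "x = 0 \<or> y = 0")
    case True then show ?thesis by (auto simp: vge_def)
  next
    case False
    then have "v (x * y) = v x + v y" using vmult by blast
    then show ?thesis using a False by (auto simp: vge_def)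
  qed
qed

lemma vge_sum: "finite A \<Longrightarrow> (\<And>a. a \<in> A \<Longrightarrow> vge v N (f a)) \<Longrightarrow> vge v N (\<Sum>a\<in>A. f a)"
  by (induction A rule: finite_induct) (auto intro: vge_add)

lemma val_ring_vge: "x \<in> val_ring v \<longleftrightarrow> vge v 0 x"
  by (auto simp: val_ring_def vge_def)

lemma R_add: "x \<in> val_ring v \<Longrightarrow> y \<in> val_ring v \<Longrightarrow> x + y \<in> val_ring v"
  using vge_add by (simp add: val_ring_vge)
lemma R_diff: "x \<in> val_ring v \<Longrightarrow> y \<in> val_ring v \<Longrightarrow> x - y \<in> val_ring v"
  using vge_diff by (simp add: val_ring_vge)
lemma R_neg: "x \<in> val_ring v \<Longrightarrow> - x \<in> val_ring v"
  using vge_neg by (simp add: val_ring_vge)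
lemma R_mult: "x \<in> val_ring v \<Longrightarrow> y \<in> val_ring v \<Longrightarrow> x * y \<in> val_ring v"
  using vge_mult[of 0 x 0 y] by (simp add: val_ring_vge)
lemma R_0[simp]: "0 \<in> val_ring v" by (simp add: val_ring_def)
lemma R_1[simp]: "1 \<in> val_ring v" by (simp add: val_ring_def v1)
lemma R_sum: "finite A \<Longrightarrow> (\<And>a. a \<in> A \<Longrightarrow> f a \<in> val_ring v) \<Longrightarrow> (\<Sum>a\<in>A. f a) \<in> val_ring v"
  using vge_sum[of A 0 f] by (simp add: val_ring_vge)

lemma finite_vbound: "finite F \<Longrightarrow> \<exists>N. \<forall>x\<in>F. vge v N x"
proof (induction F rule: finite_induct)
  case empty then show ?case by simp
next
  case (insert x F)
  then obtain N where N: "\<forall>y\<in>F. vge v N y" by blast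
  show ?case
  proof (rule exI[of _ "min N (v x)"], intro ballI)
    fix y assume "y \<in> insert x F"
    then show "vge v (min N (v x)) y"
    proof
      assume "y = x" then show ?thesis by (simp add: vge_def)
    next
      assume "y \<in> F" then have "vge v N y" using N by blast
      then show ?thesis by (rule vge_mono) simp
    qed
  qed
qed

lemma int_min_exists:
  fixes S :: "int set"
  assumes "S \<noteq> {}" "\<forall>y\<in>S. N \<le> y"
  shows "\<exists>a\<in>S. \<forall>y\<in>S. a \<le> y"
proof -
  define T where "T = (\<lambda>y. nat (y - N)) ` S"
  have "T \<noteq> {}" using assms by (simp add: T_def)
  then obtain m0 where "m0 \<in> T" by blast
  define m where "m = (LEAST k. k \<in> T)"
  have m: "m \<in> T" "\<forall>k\<in>T. m \<le> k"
    using LeastI[of "\<lambda>k. k \<in> T" m0, OF \<open>m0 \<in> T\<close>] Least_le[of "\<lambda>k. k \<in> T"] unfolding m_def by auto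
  then obtain a where a: "a \<in> S" "m = nat (a - N)" by (auto simp: T_def)
  have "\<forall>y\<in>S. a \<le> y"
  proof
    fix y assume "y \<in> S"
    then have "m \<le> nat (y - N)" using m by (auto simp: T_def)
    then show "a \<le> y" using a assms \<open>y \<in> S\<close> by auto
  qed
  then show ?thesis using a by blast
qed

end


fun red :: "('k::field \<Rightarrow> int) \<Rightarrow> 'k \<Rightarrow> (nat \<Rightarrow> int) \<Rightarrow> (nat \<Rightarrow> nat \<Rightarrow> 'k) \<Rightarrow> nat \<Rightarrow> nat \<Rightarrow> nat \<Rightarrow> 'k" where
  "red v \<pi> a \<sigma> j 0 = \<sigma> j"
| "red v \<pi> a \<sigma> j (Suc i) = (\<lambda>m. red v \<pi> a \<sigma> j i m -
     (if j < i \<and> red v \<pi> a \<sigma> j i i \<noteq> 0 \<and> a i \<le> v (red v \<pi> a \<sigma> j i i)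
      then red v \<pi> a \<sigma> j i i / \<pi> powi a i else 0) * \<sigma> i m)"

context dval
begin

lemma red_props:
  assumes pi: "\<pi> \<noteq> 0" "v \<pi> = 1"
    and Lclos: "\<forall>c\<in>L. \<forall>d\<in>L. \<forall>q\<in>val_ring v. (\<lambda>m. c m - q * d m) \<in> L"
    and sig: "\<forall>i<n. \<sigma> i \<in> L \<and> (\<forall>m<i. \<sigma> i m = 0) \<and> \<sigma> i i = \<pi> powi a i"
    and j: "j < n"
  shows "i \<le> n \<Longrightarrow> red v \<pi> a \<sigma> j i \<in> L \<and> (\<forall>m\<le>j. red v \<pi> a \<sigma> j i m = \<sigma> j m) \<and>
           (\<forall>m. j < m \<and> m < i \<longrightarrow> red v \<pi> a \<sigma> j i m = 0 \<or> v (red v \<pi> a \<sigma> j i m) < a m)"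
proof (induction i)
  case 0
  then show ?case using sig j by auto
next
  case (Suc i)
  then have IH: "red v \<pi> a \<sigma> j i \<in> L" "\<forall>m\<le>j. red v \<pi> a \<sigma> j i m = \<sigma> j m"
    "\<forall>m. j < m \<and> m < i \<longrightarrow> red v \<pi> a \<sigma> j i m = 0 \<or> v (red v \<pi> a \<sigma> j i m) < a m"
    and i: "i < n" by auto
  define g where "g = red v \<pi> a \<sigma> j i"
  define C where "C = (j < i \<and> g i \<noteq> 0 \<and> a i \<le> v (g i))"
  define q where "q = (if C then g i / \<pi> powi a i else 0)"
  have eq: "red v \<pi> a \<sigma> j (Suc i) = (\<lambda>m. g m - q * \<sigma> i m)"
    by (simp add: g_def q_def C_def)
  have pia: "\<pi> powi a i \<noteq> 0" "v (\<pi> powi a i) = a i" using pi vpowi[of \<pi> "a i"] by auto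
  have qR: "q \<in> val_ring v"
  proof (cases C)
    case True
    then have "v q = v (g i) - a i" using pia vdiv[of "g i" "\<pi> powi a i"] by (simp add: q_def C_def)
    then show ?thesis using True by (simp add: val_ring_def C_def)
  qed (simp add: q_def)
  have s1: "red v \<pi> a \<sigma> j (Suc i) \<in> L"
    unfolding eq using Lclos IH(1) sig i qR by (simp add: g_def)
  have s2: "\<forall>m\<le>j. red v \<pi> a \<sigma> j (Suc i) m = \<sigma> j m"
  proof (intro allI impI)
    fix m assume m: "m \<le> j"
    show "red v \<pi> a \<sigma> j (Suc i) m = \<sigma> j m"
    proof (cases C)
      case True
      then have "\<sigma> i m = 0" using sig i m by (simp add: C_def)
      then show ?thesis using IH(2) m unfolding eq by (simp add: g_def)
    next
      case False
      then have "q = 0" by (simp add: q_def)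
      then show ?thesis using IH(2) m unfolding eq by (simp add: g_def)
    qed
  qed
  have s3: "\<forall>m. j < m \<and> m < Suc i \<longrightarrow> red v \<pi> a \<sigma> j (Suc i) m = 0 \<or> v (red v \<pi> a \<sigma> j (Suc i) m) < a m"
  proof (intro allI impI)
    fix m assume m: "j < m \<and> m < Suc i"
    show "red v \<pi> a \<sigma> j (Suc i) m = 0 \<or> v (red v \<pi> a \<sigma> j (Suc i) m) < a m"
    proof (cases "m < i")
      case True
      then have "\<sigma> i m = 0" using sig i by simp
      then show ?thesis using IH(3) m True unfolding eq by (simp add: g_def)
    next
      case False
      then have mi: "m = i" using m by simp
      show ?thesis
      proof (cases C)
        case True
        then have "red v \<pi> a \<sigma> j (Suc i) m = 0"
          using mi pia sig i unfolding eq by (simp add: q_def)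
        then show ?thesis by simp
      next
        case False
        then have "g i = 0 \<or> v (g i) < a i" using m mi by (auto simp: C_def)
        then show ?thesis using False mi unfolding eq by (simp add: q_def)
      qed
    qed
  qed
  show ?case using s1 s2 s3 by blast
qed

end


lemma (in comm_semiring_1) frob_gen:
  assumes "prime p" "of_nat p = 0"
  shows "(x + y) ^ p = x ^ p + y ^ p"
proof -
  have p0: "p > 0" using assms(1) prime_gt_0_nat by blast
  have "(x + y) ^ p = (\<Sum>k\<le>p. of_nat (p choose k) * x ^ k * y ^ (p - k))"
    by (rule binomial_ring)
  also have "\<dots> = (\<Sum>k\<in>{0,p}. of_nat (p choose k) * x ^ k * y ^ (p - k))"
  proof (intro sum.mono_neutral_right ballI)
    fix k assume "k \<in> {..p} - {0, p}"
    hence k: "k > 0" "k < p" by auto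
    have "p dvd (p choose k)"
      by (rule dvd_choose_prime) (use k assms in auto)
    then obtain m where "p choose k = p * m" by blast
    hence "of_nat (p choose k) = 0"
      using assms(2) by (simp add: of_nat_mult)
    thus "of_nat (p choose k) * x ^ k * y ^ (p - k) = 0" by simp
  qed auto
  finally show ?thesis using p0 by (simp add: add_ac)
qed

lemma (in comm_semiring_1) frob_sum:
  assumes "prime p" "of_nat p = 0"
  shows "sum f A ^ p = sum (\<lambda>i. f i ^ p) A"
proof (induction A rule: infinite_finite_induct)
  case (infinite A) then show ?case using assms prime_gt_0_nat[of p] by (simp add: power_0_left)
next
  case empty then show ?case using assms prime_gt_0_nat[of p] by (simp add: power_0_left)
next
  case (insert x F) then show ?case using frob_gen[OF assms] by simp
qed

lemma hmul_add_left: "hmul mu (\<lambda>k. x k + y k) z = (\<lambda>k. hmul mu x z k + hmul mu y z k)"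
  by (simp add: hmul_def algebra_simps sum.distrib)
lemma hmul_zero_left: "hmul mu (\<lambda>k. 0) z = (\<lambda>k. 0)"
  by (simp add: hmul_def)
lemma hmul_scale_left: "hmul mu (\<lambda>k. c * x k) z = (\<lambda>k. c * hmul mu x z k)"
  by (simp add: hmul_def algebra_simps sum_distrib_left)
lemma hmul_add_right: "hmul mu z (\<lambda>k. x k + y k) = (\<lambda>k. hmul mu z x k + hmul mu z y k)"
  by (simp add: hmul_def algebra_simps sum.distrib)
lemma hmul_zero_right: "hmul mu z (\<lambda>k. 0) = (\<lambda>k. 0)"
  by (simp add: hmul_def)
lemma hmul_scale_right: "hmul mu z (\<lambda>k. c * x k) = (\<lambda>k. c * hmul mu z x k)"
  by (simp add: hmul_def algebra_simps sum_distrib_left)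

definition fadd :: "('i \<Rightarrow> 'k::field) \<Rightarrow> ('i \<Rightarrow> 'k) \<Rightarrow> ('i \<Rightarrow> 'k)" where
  "fadd x y = (\<lambda>k. x k + y k)"
definition fzero :: "'i \<Rightarrow> 'k::field" where "fzero = (\<lambda>k. 0)"

locale calg =
  fixes mu :: "'i::finite \<Rightarrow> 'i \<Rightarrow> 'i \<Rightarrow> 'k::field" and u :: "'i \<Rightarrow> 'k"
  assumes assoc: "\<And>x y z. hmul mu (hmul mu x y) z = hmul mu x (hmul mu y z)"
    and comm: "\<And>x y. hmul mu x y = hmul mu y x"
    and unit: "\<And>x. hmul mu u x = x"
    and unz: "u \<noteq> (\<lambda>k. 0)"
begin

sublocale H: comm_semiring_1 "hmul mu" u fadd fzero
proof (unfold_locales, unfold fadd_def fzero_def)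
  fix a b c :: "'i \<Rightarrow> 'k"
  show "hmul mu (hmul mu a b) c = hmul mu a (hmul mu b c)" by (rule assoc)
  show "hmul mu a b = hmul mu b a" by (rule comm)
  show "hmul mu u a = a" by (rule unit)
  show "hmul mu (\<lambda>k. a k + b k) c = (\<lambda>k. hmul mu a c k + hmul mu b c k)" by (rule hmul_add_left)
  show "hmul mu (\<lambda>k. 0) a = (\<lambda>k. 0)" by (rule hmul_zero_left)
  show "hmul mu a (\<lambda>k. 0) = (\<lambda>k. 0)" by (rule hmul_zero_right)
  show "(\<lambda>k. 0) \<noteq> u" using unz by metis
qed (auto simp: algebra_simps fadd_def)

lemma hpow_eq: "hpow mu u x m = H.power x m"
  by (induction m) auto

lemma Hof_nat: "H.of_nat m = (\<lambda>k. of_nat m * u k)"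
proof (induction m)
  case 0
  have "H.of_nat 0 = fzero" by (rule H.of_nat_0)
  then show ?case by (simp only:) (simp add: fzero_def)
next
  case (Suc m)
  have "H.of_nat (Suc m) = fadd u (H.of_nat m)" by (rule H.of_nat_Suc)
  then show ?case by (simp only: Suc.IH) (simp add: fadd_def algebra_simps)
qed

lemma Hsum: "H.sum f A = (\<lambda>k. \<Sum>a\<in>A. f a k)"
  by (induction A rule: infinite_finite_induct) (auto simp: fadd_def fzero_def)

lemma hpow_scale: "hpow mu u (\<lambda>k. c * x k) m = (\<lambda>k. c ^ m * hpow mu u x m k)"
  by (induction m) (auto simp: hmul_scale_left hmul_scale_right unit)

lemma frob_lincomb:
  assumes "prime p" "of_nat p = (0::'k)"
  shows "hpow mu u (\<lambda>k. \<Sum>l\<in>A. c l * x l k) p = (\<lambda>k. \<Sum>l\<in>A. c l ^ p * hpow mu u (x l) p k)"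
proof -
  have "H.of_nat p = fzero" using assms by (simp only: Hof_nat) (simp add: fzero_def)
  then have "H.power (H.sum (\<lambda>l. (\<lambda>k. c l * x l k)) A) p = H.sum (\<lambda>l. H.power (\<lambda>k. c l * x l k) p) A"
    using H.frob_sum[OF assms(1)] by blast
  then show ?thesis by (simp add: Hsum hpow_eq[symmetric] hpow_scale)
qed

end


lemma fun_sum_apply: "(sum f A) x = (\<Sum>a\<in>A. f a x)"
  by (induction A rule: infinite_finite_induct) auto

lemma coord_functionals:
  fixes t :: "nat \<Rightarrow> 'i::finite \<Rightarrow> 'k::field"
  assumes indep: "\<forall>c. lincomb n c t = (\<lambda>_. 0) \<longrightarrow> (\<forall>l<n. c l = 0)"
  shows "\<exists>g. \<forall>m<n. \<forall>c. (\<Sum>k\<in>UNIV. lincomb n c t k * g m k) = c m"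
proof -
  define sc :: "'k \<Rightarrow> ('i \<Rightarrow> 'k) \<Rightarrow> ('i \<Rightarrow> 'k)" where "sc = (\<lambda>c x. (\<lambda>k. c * x k))"
  interpret VP: vector_space_pair sc "(*) :: 'k \<Rightarrow> 'k \<Rightarrow> 'k"
    by unfold_locales (auto simp: sc_def algebra_simps)
  have lc: "lincomb n c t = (\<Sum>l<n. sc (c l) (t l))" for c
    by (rule ext) (simp add: lincomb_def sc_def fun_sum_apply)
  have inj: "inj_on t {..<n}"
  proof (rule inj_onI)
    fix a b assume ab: "a \<in> {..<n}" "b \<in> {..<n}" "t a = t b"
    show "a = b"
    proof (rule ccontr)
      assume ne: "a \<noteq> b"
      define c where "c = (\<lambda>l. if l = a then (1::'k) else if l = b then -1 else 0)"
      have "(\<Sum>l<n. c l * t l k) = t a k - t b k" for k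
      proof -
        have "(\<Sum>l<n. c l * t l k) = (\<Sum>l<n. (if l = a then t l k else 0) - (if l = b then t l k else 0))"
          by (rule sum.cong) (auto simp: c_def ne)
        also have "\<dots> = t a k - t b k" using ab by (simp add: sum_subtractf)
        finally show ?thesis .
      qed
      then have "lincomb n c t = (\<lambda>k. t a k - t b k)" by (simp add: lincomb_def)
      also have "\<dots> = (\<lambda>_. 0)" using ab by simp
      finally have "c a = 0" using indep ab by blast
      then show False by (simp add: c_def)
    qed
  qed
  have ind: "VP.vs1.independent (t ` {..<n})"
  proof (rule VP.vs1.independent_if_scalars_zero)
    show "finite (t ` {..<n})" by simp
    fix f x assume s: "(\<Sum>x\<in>t ` {..<n}. sc (f x) x) = 0" and x: "x \<in> t ` {..<n}"
    have "(\<Sum>x\<in>t ` {..<n}. sc (f x) x) = (\<Sum>l<n. sc (f (t l)) (t l))"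
      by (rule sum.reindex[OF inj, unfolded comp_def])
    then have "lincomb n (\<lambda>l. f (t l)) t = (\<lambda>_. 0)" using s lc by (simp add: zero_fun_def)
    then show "f x = 0" using indep x by auto
  qed
  have "\<forall>m<n. \<exists>g. Vector_Spaces.linear sc (*) g \<and> (\<forall>x\<in>t ` {..<n}. g x = (if x = t m then 1 else 0))"
  proof (intro allI impI)
    fix m
    show "\<exists>g. Vector_Spaces.linear sc (*) g \<and> (\<forall>x\<in>t ` {..<n}. g x = (if x = t m then 1 else 0))"
      using VP.linear_independent_extend[OF ind, of "\<lambda>x. if x = t m then 1 else 0"] by blast
  qed
  then obtain G where G: "\<forall>m<n. Vector_Spaces.linear sc (*) (G m) \<and> (\<forall>x\<in>t ` {..<n}. G m x = (if x = t m then 1 else 0))"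
    by metis
  define g where "g = (\<lambda>m k. G m (ev k))"
  have "(\<Sum>k\<in>UNIV. lincomb n c t k * g m k) = c m" if m: "m < n" for m c
  proof -
    interpret L: Vector_Spaces.linear sc "(*)" "G m" using G m by blast
    have xdec: "x = (\<Sum>k\<in>UNIV. sc (x k) (ev k))" for x :: "'i \<Rightarrow> 'k"
      by (rule ext) (simp add: fun_sum_apply sc_def ev_def if_distrib cong: if_cong)
    have "G m x = (\<Sum>k\<in>UNIV. x k * g m k)" for x
      by (subst xdec) (simp add: L.sum L.scale g_def)
    then have "(\<Sum>k\<in>UNIV. lincomb n c t k * g m k) = G m (lincomb n c t)" by simp
    also have "\<dots> = (\<Sum>l<n. c l * G m (t l))" by (simp add: lc L.sum L.scale)
    also have "\<dots> = (\<Sum>l<n. if l = m then c l else 0)"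
      by (rule sum.cong) (use G m inj in \<open>auto simp: inj_on_eq_iff\<close>)
    also have "\<dots> = c m" using m by simp
    finally show ?thesis .
  qed
  then show ?thesis by blast
qed



lemma tri_indep:
  fixes s :: "nat \<Rightarrow> nat \<Rightarrow> 'k::field"
  assumes low: "\<forall>j<n. \<forall>m<j. s j m = 0" and diag: "\<forall>j<n. s j j \<noteq> 0"
    and z: "\<forall>m<n. (\<Sum>l<n. c l * s l m) = 0"
  shows "\<forall>l<n. c l = 0"
proof -
  have "c l = 0" if "l < n" for l
    using that
  proof (induction l rule: less_induct)
    case (less l)
    have "(\<Sum>k<n. c k * s k l) = (\<Sum>k<n. if k = l then c l * s l l else 0)"
    proof (rule sum.cong)
      fix k assume k: "k \<in> {..<n}"
      show "c k * s k l = (if k = l then c l * s l l else 0)"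
      proof (cases "k < l")
        case True then show ?thesis using less by auto
      next
        case False
        then show ?thesis using low k by (cases "k = l") auto
      qed
    qed simp
    also have "\<dots> = c l * s l l" using less.prems by simp
    finally show ?case using z diag less.prems by simp
  qed
  then show ?thesis by blast
qed

lemma tri_span:
  fixes s :: "nat \<Rightarrow> nat \<Rightarrow> 'k::field"
  assumes low: "\<forall>j<n. \<forall>m<j. s j m = 0" and diag: "\<forall>j<n. s j j \<noteq> 0"
    and Q0: "Q 0" and Qadd: "\<forall>a b. Q a \<longrightarrow> Q b \<longrightarrow> Q (a + b)"
    and step: "\<forall>j<n. \<forall>c. P c \<longrightarrow> (\<forall>l<j. c l = 0) \<longrightarrow>
                  Q (c j / s j j) \<and> P (\<lambda>m. c m - (c j / s j j) * s j m)"
  shows "j \<le> n \<Longrightarrow> P c \<Longrightarrow> (\<forall>l<j. c l = 0) \<Longrightarrow>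
           \<exists>r. (\<forall>l. Q (r l)) \<and> (\<forall>m<n. c m = (\<Sum>l<n. r l * s l m))"
proof (induction "n - j" arbitrary: j c)
  case 0
  then have "j = n" by simp
  then show ?case using 0 Q0 by (intro exI[of _ "\<lambda>_. 0"]) auto
next
  case (Suc k)
  then have jn: "j < n" by simp
  define q where "q = c j / s j j"
  define c' where "c' = (\<lambda>m. c m - q * s j m)"
  have Qq: "Q q" and Pc': "P c'" using step jn Suc.prems unfolding q_def c'_def by blast+
  have z': "\<forall>l<Suc j. c' l = 0"
  proof (intro allI impI)
    fix l assume "l < Suc j"
    then consider "l < j" | "l = j" by linarith
    then show "c' l = 0"
    proof cases
      case 1 then show ?thesis using Suc.prems low jn by (simp add: c'_def)
    next
      case 2 then show ?thesis using diag jn by (simp add: c'_def q_def)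
    qed
  qed
  obtain r where r: "\<forall>l. Q (r l)" "\<forall>m<n. c' m = (\<Sum>l<n. r l * s l m)"
    using Suc.hyps(1)[of "Suc j" c'] Suc.hyps(2) jn Pc' z' by fastforce
  define r' where "r' = r(j := r j + q)"
  have "\<forall>l. Q (r' l)" using r(1) Qq Qadd by (simp add: r'_def)
  moreover have "c m = (\<Sum>l<n. r' l * s l m)" if m: "m < n" for m
  proof -
    have "(\<Sum>l<n. r' l * s l m) = (\<Sum>l<n. r l * s l m + (if l = j then q * s j m else 0))"
      by (rule sum.cong) (auto simp: r'_def algebra_simps)
    also have "\<dots> = (\<Sum>l<n. r l * s l m) + q * s j m" using jn by (simp add: sum.distrib)
    also have "\<dots> = c m" using r(2) m unfolding c'_def by (metis diff_add_cancel)
    finally show ?thesis by simp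
  qed
  ultimately show ?case by blast
qed



theorem proposition6p1:
  fixes v :: "'k::field \<Rightarrow> int" and \<pi> :: 'k and p n :: nat
    and mu :: "'i::finite \<Rightarrow> 'i \<Rightarrow> 'i \<Rightarrow> 'k" and u :: "'i \<Rightarrow> 'k"
    and D :: "'i \<Rightarrow> 'i \<Rightarrow> 'i \<Rightarrow> 'k" and e :: "'i \<Rightarrow> 'k" and S :: "'i \<Rightarrow> 'i \<Rightarrow> 'k"
    and t :: "nat \<Rightarrow> 'i \<Rightarrow> 'k" and B :: "nat \<Rightarrow> nat \<Rightarrow> 'k"
    and H0 :: "('i \<Rightarrow> 'k) set"
  assumes R: "complete_dvr_char_p v \<pi> p"
    and H: "comm_cocomm_hopf_algebra mu u D e S"
    and rank: "card (UNIV :: 'i set) = p ^ n"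
    and primgen: "primitively_generated mu u D"
    and t_basis: "is_basis_over UNIV n t (Prim D u)"
    and B_assoc: "\<forall>i<n. hpow mu u (t i) p = lincomb n (\<lambda>j. B j i) t"
    and H0: "hopf_order v mu u D e S H0"
  shows "\<exists>(s :: nat \<Rightarrow> 'i \<Rightarrow> 'k) (A :: nat \<Rightarrow> nat \<Rightarrow> 'k) (\<Theta> :: nat \<Rightarrow> nat \<Rightarrow> 'k).
     is_basis_over (val_ring v) n s (H0 \<inter> Prim D u) \<and>
     (\<forall>i<n. hpow mu u (s i) p = lincomb n (\<lambda>j. A j i) s) \<and>
     (\<forall>i<n. \<forall>j<n. A i j \<in> val_ring v) \<and>
     (\<exists>\<Psi> :: nat \<Rightarrow> nat \<Rightarrow> 'k. \<forall>i<n. \<forall>j<n.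
        (\<Sum>k<n. \<Theta> i k * \<Psi> k j) = (if i = j then 1 else 0) \<and>
        (\<Sum>k<n. \<Psi> i k * \<Theta> k j) = (if i = j then 1 else 0)) \<and>
     (\<forall>i<n. \<forall>j<n. i < j \<longrightarrow> \<Theta> i j = 0) \<and>
     (\<forall>i<n. \<forall>j\<le>i. \<Theta> i j \<noteq> 0 \<longrightarrow> v (\<Theta> i j) \<le> v (\<Theta> i i)) \<and>
     (\<forall>i<n. \<Theta> i i = \<pi> powi v (\<Theta> i i)) \<and>
     (\<forall>i<n. \<forall>j<n. (\<Sum>k<n. \<Theta> i k * A k j) = (\<Sum>k<n. B i k * (\<Theta> k j) ^ p))"
proof -
  have nv: "normalized_discrete_valuation v" and pi0: "\<pi> \<noteq> 0" and vpi: "v \<pi> = 1"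
    and pp: "prime p" and p0: "of_nat p = (0::'k)"
    using R by (auto simp: complete_dvr_char_p_def)
  interpret dval v by (rule dval.intro[OF nv])
  let ?R = "val_ring v"
  obtain r b where bb: "is_basis_over ?R r b H0" using H0 by (auto simp: hopf_order_def)
  have uH0: "u \<in> H0" and mulH0: "\<forall>x\<in>H0. \<forall>y\<in>H0. hmul mu x y \<in> H0"
    and spanK: "\<forall>x. \<exists>r c b. (\<forall>l<r. b l \<in> H0) \<and> x = lincomb r c b"
    using H0 by (auto simp: hopf_order_def)
  have H0eq: "H0 = {lincomb r d b | d. \<forall>l<r. d l \<in> ?R}" using bb by (simp add: is_basis_over_def)
  have H0_comb: "(\<lambda>k. \<alpha> * x k + \<beta> * y k) \<in> H0"
    if hxy: "x \<in> H0" "y \<in> H0" "\<alpha> \<in> ?R" "\<beta> \<in> ?R" for x y \<alpha> \<beta>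
  proof -
    obtain dx dy where dx: "x = lincomb r dx b" "\<forall>l<r. dx l \<in> ?R"
      and dy: "y = lincomb r dy b" "\<forall>l<r. dy l \<in> ?R"
      using hxy(1,2) H0eq by blast
    have "(\<lambda>k. \<alpha> * x k + \<beta> * y k) = lincomb r (\<lambda>l. \<alpha> * dx l + \<beta> * dy l) b"
      by (rule ext) (simp add: dx(1) dy(1) lincomb_def sum_distrib_left sum.distrib algebra_simps)
    moreover have "\<forall>l<r. \<alpha> * dx l + \<beta> * dy l \<in> ?R" using dx dy hxy by (simp add: R_add R_mult)
    ultimately show ?thesis using H0eq by blast
  qed
  have H0_0: "(\<lambda>k. 0) \<in> H0"
  proof -
    have "lincomb r (\<lambda>_. 0) b = (\<lambda>k. 0)" by (simp add: lincomb_def)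
    moreover have "lincomb r (\<lambda>_. 0) b \<in> H0" unfolding H0eq by (intro CollectI exI[of _ "\<lambda>_. 0"]) simp
    ultimately show ?thesis by simp
  qed
  have H0_sum: "finite A \<Longrightarrow> (\<forall>l\<in>A. c l \<in> ?R \<and> y l \<in> H0) \<Longrightarrow> (\<lambda>k. \<Sum>l\<in>A. c l * y l k) \<in> H0" for A c y
  proof (induction A rule: finite_induct)
    case empty then show ?case using H0_0 by simp
  next
    case (insert x F)
    then have "(\<lambda>k. c x * y x k + 1 * (\<Sum>l\<in>F. c l * y l k)) \<in> H0"
      by (intro H0_comb) auto
    then show ?case using insert by simp
  qed
  obtain N0 where N0: "\<forall>z\<in>{b l k | l k. l < r}. vge v N0 z"
  proof -
    have "{b l k | l k. l < r} = (\<lambda>(l, k). b l k) ` ({..<r} \<times> UNIV)" by auto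
    then have "finite {b l k | l k. l < r}" by simp
    then show ?thesis using finite_vbound that by blast
  qed
  have H0_bound: "vge v N0 (x k)" if "x \<in> H0" for x k
  proof -
    obtain d where d: "x = lincomb r d b" "\<forall>l<r. d l \<in> ?R" using \<open>x \<in> H0\<close> H0eq by blast
    have "vge v (0 + N0) (d l * b l k)" if "l < r" for l
      using d(2) that N0 by (intro vge_mult) (auto simp: val_ring_vge)
    then show ?thesis unfolding d(1) lincomb_def by (auto intro: vge_sum)
  qed
  have tind: "\<forall>c. lincomb n c t = (\<lambda>_. 0) \<longrightarrow> (\<forall>l<n. c l = 0)"
    using t_basis by (simp add: is_basis_over_def)
  have Prim_eq: "Prim D u = {lincomb n c t | c. True}"
    using t_basis by (simp add: is_basis_over_def)
  have Tcong: "(\<forall>m<n. c m = c' m) \<Longrightarrow> lincomb n c t = lincomb n c' t" for c c'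
    unfolding lincomb_def by (intro ext sum.cong) auto
  have Tlin: "lincomb n (\<lambda>l. \<alpha> * c l + \<beta> * c' l) t = (\<lambda>k. \<alpha> * lincomb n c t k + \<beta> * lincomb n c' t k)" for \<alpha> \<beta> c c'
    by (rule ext) (simp add: lincomb_def sum_distrib_left sum.distrib algebra_simps)
  have Tinj: "\<forall>m<n. c m = c' m" if "lincomb n c t = lincomb n c' t" for c c'
  proof -
    have "lincomb n (\<lambda>l. 1 * c l + (-1) * c' l) t = (\<lambda>_. 0)"
      unfolding Tlin using that by simp
    then show ?thesis using tind by fastforce
  qed
  define L where "L = {c. lincomb n c t \<in> H0}"
  have Lcomb: "(\<lambda>l. \<alpha> * c l + \<beta> * d l) \<in> L" if "c \<in> L" "d \<in> L" "\<alpha> \<in> ?R" "\<beta> \<in> ?R" for c d \<alpha> \<beta>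
    using that H0_comb by (simp add: L_def Tlin)
  have Lclos: "\<forall>c\<in>L. \<forall>d\<in>L. \<forall>q\<in>?R. (\<lambda>m. c m - q * d m) \<in> L"
  proof (intro ballI)
    fix c d q assume "c \<in> L" "d \<in> L" "q \<in> ?R"
    then have "(\<lambda>l. 1 * c l + (- q) * d l) \<in> L" by (intro Lcomb) (auto simp: R_neg)
    then show "(\<lambda>m. c m - q * d m) \<in> L" by simp
  qed
  obtain g where g: "\<forall>m<n. \<forall>c. (\<Sum>k\<in>UNIV. lincomb n c t k * g m k) = c m"
    using coord_functionals[OF tind] by blast
  obtain N1 where N1: "\<forall>z\<in>{g m k | m k. m < n}. vge v N1 z"
  proof -
    have "{g m k | m k. m < n} = (\<lambda>(m, k). g m k) ` ({..<n} \<times> UNIV)" by auto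
    then have "finite {g m k | m k. m < n}" by simp
    then show ?thesis using finite_vbound that by blast
  qed
  have N1': "vge v N1 (g m k)" if "m < n" for m k using N1 that by blast
  have Lbound: "vge v (N0 + N1) (c m)" if "c \<in> L" "m < n" for c m
  proof -
    have "vge v (N0 + N1) (\<Sum>k\<in>UNIV. lincomb n c t k * g m k)"
      using that H0_bound N1' by (intro vge_sum vge_mult) (auto simp: L_def)
    then show ?thesis using g that by simp
  qed
  have contain: "\<exists>N::nat. (\<lambda>l. if l = j then \<pi> ^ N else 0) \<in> L" if j: "j < n" for j
  proof -
    obtain r' c' b' where rb: "\<forall>l<r'. b' l \<in> H0" "t j = lincomb r' c' b'" using spanK by blast
    obtain N' where N': "\<forall>z\<in>c' ` {..<r'}. vge v N' z" using finite_vbound by blast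
    define N where "N = nat (- N')"
    have vN: "vge v (int N) (\<pi> ^ N)" using vpow[OF pi0, of N] vpi by (simp add: vge_def)
    have cR: "\<pi> ^ N * c' l \<in> ?R" if "l < r'" for l
    proof -
      have "vge v (int N + N') (\<pi> ^ N * c' l)" using vN N' that by (intro vge_mult) auto
      then show ?thesis unfolding val_ring_vge by (rule vge_mono) (simp add: N_def)
    qed
    have "(\<lambda>k. \<Sum>l\<in>{..<r'}. (\<pi> ^ N * c' l) * b' l k) \<in> H0"
      using cR rb by (intro H0_sum) auto
    moreover have "(\<lambda>k. \<Sum>l\<in>{..<r'}. (\<pi> ^ N * c' l) * b' l k) = lincomb n (\<lambda>l. if l = j then \<pi> ^ N else 0) t"
    proof (rule ext)
      fix k
      have "lincomb n (\<lambda>l. if l = j then \<pi> ^ N else 0) t k = (\<Sum>l<n. if l = j then \<pi> ^ N * t j k else 0)"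
        unfolding lincomb_def by (rule sum.cong) auto
      also have "\<dots> = \<pi> ^ N * t j k" using j by simp
      also have "\<dots> = (\<Sum>l\<in>{..<r'}. (\<pi> ^ N * c' l) * b' l k)"
        by (simp add: rb(2) lincomb_def sum_distrib_left mult.assoc)
      finally show "(\<Sum>l\<in>{..<r'}. (\<pi> ^ N * c' l) * b' l k) = lincomb n (\<lambda>l. if l = j then \<pi> ^ N else 0) t k" by simp
    qed
    ultimately show ?thesis by (auto simp: L_def)
  qed
  define V where "V = (\<lambda>j. {v (c j) | c. c \<in> L \<and> (\<forall>l<j. c l = 0) \<and> c j \<noteq> 0})"
  have "\<exists>a\<in>V j. \<forall>y\<in>V j. a \<le> y" if j: "j < n" for j
  proof (rule int_min_exists)
    obtain N :: nat where "(\<lambda>l. if l = j then \<pi> ^ N else 0) \<in> L" using contain j by blast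
    then have "v (\<pi> ^ N) \<in> V j" unfolding V_def using pi0
      by (intro CollectI exI[of _ "\<lambda>l. if l = j then \<pi> ^ N else 0"]) auto
    then show "V j \<noteq> {}" by blast
    show "\<forall>y\<in>V j. N0 + N1 \<le> y"
      using Lbound j by (auto simp: V_def vge_def)
  qed
  then have aex: "\<exists>x. x \<in> V j \<and> (\<forall>y\<in>V j. x \<le> y)" if "j < n" for j using that by blast
  define a where "a = (\<lambda>j. SOME x. x \<in> V j \<and> (\<forall>y\<in>V j. x \<le> y))"
  have a: "\<forall>j<n. a j \<in> V j \<and> (\<forall>y\<in>V j. a j \<le> y)"
    unfolding a_def using someI_ex[OF aex] by blast
  have amin: "vge v (a j) (c j)" if "j < n" "c \<in> L" "\<forall>l<j. c l = 0" for j c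
  proof (cases "c j = 0")
    case False
    then have "v (c j) \<in> V j" using that by (auto simp: V_def)
    then show ?thesis using a that by (simp add: vge_def)
  qed (simp)
  have pia: "\<pi> powi a j \<noteq> 0" "v (\<pi> powi a j) = a j" for j using vpowi[OF pi0, of "a j"] vpi pi0 by auto
  have "\<exists>\<tau>. \<tau> \<in> L \<and> (\<forall>m<j. \<tau> m = 0) \<and> \<tau> j = \<pi> powi a j" if j: "j < n" for j
  proof -
    obtain c where c: "c \<in> L" "\<forall>l<j. c l = 0" "c j \<noteq> 0" "v (c j) = a j"
      using a j by (auto simp: V_def)
    define \<alpha> where "\<alpha> = \<pi> powi a j / c j"
    have "v \<alpha> = 0" using vdiv[of "\<pi> powi a j" "c j"] pia c by (simp add: \<alpha>_def)
    then have aR: "\<alpha> \<in> ?R" by (simp add: val_ring_def)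
    have "(\<lambda>l. \<alpha> * c l) \<in> L" using Lcomb[OF c(1) c(1) aR R_0] by simp
    moreover have "\<forall>m<j. \<alpha> * c m = 0" using c(2) by simp
    moreover have "\<alpha> * c j = \<pi> powi a j" using c(3) by (simp add: \<alpha>_def)
    ultimately show ?thesis by blast
  qed
  then have sex: "\<exists>\<tau>. \<tau> \<in> L \<and> (\<forall>m<j. \<tau> m = 0) \<and> \<tau> j = \<pi> powi a j" if "j < n" for j
    using that by blast
  define \<sigma> where "\<sigma> = (\<lambda>j. SOME \<tau>. \<tau> \<in> L \<and> (\<forall>m<j. \<tau> m = 0) \<and> \<tau> j = \<pi> powi a j)"
  have sig: "\<forall>i<n. \<sigma> i \<in> L \<and> (\<forall>m<i. \<sigma> i m = 0) \<and> \<sigma> i i = \<pi> powi a i"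
    unfolding \<sigma>_def using someI_ex[OF sex] by blast
  define s where "s = (\<lambda>j. red v \<pi> a \<sigma> j n)"
  have sprops: "s j \<in> L \<and> (\<forall>m\<le>j. s j m = \<sigma> j m) \<and>
           (\<forall>m. j < m \<and> m < n \<longrightarrow> s j m = 0 \<or> v (s j m) < a m)" if "j < n" for j
    unfolding s_def using red_props[OF pi0 vpi Lclos sig that] by simp
  have sL: "\<forall>j<n. s j \<in> L" using sprops by blast
  have low: "\<forall>j<n. \<forall>m<j. s j m = 0" using sprops sig by auto
  have sdiag: "\<forall>j<n. s j j = \<pi> powi a j" using sprops sig by auto
  have diag: "\<forall>j<n. s j j \<noteq> 0" using sdiag pia by simp
  have red3: "\<forall>j<n. \<forall>m. j < m \<and> m < n \<longrightarrow> s j m = 0 \<or> v (s j m) < a m" using sprops by blast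

  define Sv where "Sv = (\<lambda>j. lincomb n (s j) t)"
  have comb: "lincomb n c Sv = lincomb n (\<lambda>m. \<Sum>l<n. c l * s l m) t" for c
  proof (rule ext)
    fix k
    have "lincomb n c Sv k = (\<Sum>l<n. \<Sum>m<n. c l * s l m * t m k)"
      by (simp add: Sv_def lincomb_def sum_distrib_left mult.assoc)
    also have "\<dots> = (\<Sum>m<n. \<Sum>l<n. c l * s l m * t m k)" by (rule sum.swap)
    also have "\<dots> = lincomb n (\<lambda>m. \<Sum>l<n. c l * s l m) t k"
      by (simp add: lincomb_def sum_distrib_right)
    finally show "lincomb n c Sv k = lincomb n (\<lambda>m. \<Sum>l<n. c l * s l m) t k" .
  qed
  have SvH0: "\<forall>l<n. Sv l \<in> H0" using sL by (simp add: Sv_def L_def)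
  have SvPrim: "\<forall>l<n. Sv l \<in> Prim D u" using Prim_eq by (auto simp: Sv_def)
  have combH0: "lincomb n c Sv \<in> H0" if "\<forall>l<n. c l \<in> ?R" for c
  proof -
    have "(\<lambda>k. \<Sum>l\<in>{..<n}. c l * Sv l k) \<in> H0" using that SvH0 by (intro H0_sum) auto
    then show ?thesis by (simp add: lincomb_def)
  qed
  have spanR: "\<exists>r. (\<forall>l. r l \<in> ?R) \<and> (\<forall>m<n. c m = (\<Sum>l<n. r l * s l m))" if "c \<in> L" for c
  proof (rule tri_span[OF low diag, where Q = "\<lambda>x. x \<in> ?R" and P = "\<lambda>c. c \<in> L" and j = 0])
    show "\<forall>a b. a \<in> ?R \<longrightarrow> b \<in> ?R \<longrightarrow> a + b \<in> ?R" using R_add by blast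
    show "\<forall>j<n. \<forall>c. c \<in> L \<longrightarrow> (\<forall>l<j. c l = 0) \<longrightarrow>
            c j / s j j \<in> ?R \<and> (\<lambda>m. c m - c j / s j j * s j m) \<in> L"
    proof (intro allI impI conjI)
      fix j c assume j: "j < n" and c: "c \<in> L" "\<forall>l<j. c l = 0"
      show q: "c j / s j j \<in> ?R"
      proof (cases "c j = 0")
        case False
        have "vge v (a j) (c j)" using amin j c by blast
        then have "a j \<le> v (c j)" using False by (simp add: vge_def)
        moreover have "v (c j / s j j) = v (c j) - a j"
          using vdiv[of "c j" "s j j"] False sdiag pia j by simp
        ultimately show ?thesis by (simp add: val_ring_def)
      qed simp
      show "(\<lambda>m. c m - c j / s j j * s j m) \<in> L" using Lclos c q sL j by blast
    qed
  qed (use that in auto)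
  have spanK: "\<exists>r. \<forall>m<n. c m = (\<Sum>l<n. r l * s l m)" for c
    using tri_span[OF low diag, where Q = "\<lambda>x. True" and P = "\<lambda>c. True" and j = 0 and c = c] by auto
  have B2: "\<forall>c. (\<forall>l<n. c l \<in> ?R) \<longrightarrow> lincomb n c Sv = (\<lambda>_. 0) \<longrightarrow> (\<forall>l<n. c l = 0)"
  proof (rule allI, intro impI)
    fix c assume "\<forall>l<n. c l \<in> ?R" and z: "lincomb n c Sv = (\<lambda>_. 0)"
    have "lincomb n (\<lambda>m. \<Sum>l<n. c l * s l m) t = lincomb n c Sv" by (rule comb[symmetric])
    also have "\<dots> = lincomb n (\<lambda>_. 0) t" using z by (simp add: lincomb_def)
    finally have "lincomb n (\<lambda>m. \<Sum>l<n. c l * s l m) t = lincomb n (\<lambda>_. 0) t" .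
    then have "\<forall>m<n. (\<Sum>l<n. c l * s l m) = 0" using Tinj by fastforce
    then show "\<forall>l<n. c l = 0" using tri_indep[OF low diag] by blast
  qed
  have B3: "H0 \<inter> Prim D u = {lincomb n c Sv | c. \<forall>l<n. c l \<in> ?R}"
  proof
    show "H0 \<inter> Prim D u \<subseteq> {lincomb n c Sv | c. \<forall>l<n. c l \<in> ?R}"
    proof
      fix x assume x: "x \<in> H0 \<inter> Prim D u"
      then obtain c where c: "x = lincomb n c t" using Prim_eq by blast
      then have "c \<in> L" using x by (simp add: L_def)
      then obtain r' where r': "\<forall>l. r' l \<in> ?R" "\<forall>m<n. c m = (\<Sum>l<n. r' l * s l m)"
        using spanR by blast
      have "x = lincomb n r' Sv" unfolding c comb by (rule Tcong) (use r' in auto)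
      then show "x \<in> {lincomb n c Sv | c. \<forall>l<n. c l \<in> ?R}" using r' by blast
    qed
    show "{lincomb n c Sv | c. \<forall>l<n. c l \<in> ?R} \<subseteq> H0 \<inter> Prim D u"
      using combH0 Prim_eq comb by auto
  qed
  have basis: "is_basis_over ?R n Sv (H0 \<inter> Prim D u)"
    unfolding is_basis_over_def using SvH0 SvPrim B2 B3 by blast
  have Hax: "\<And>x y z. hmul mu (hmul mu x y) z = hmul mu x (hmul mu y z)"
    "\<And>x y. hmul mu x y = hmul mu y x" "\<And>x. hmul mu u x = x" and cu: "counit e u = 1"
    using H by (auto simp: comm_cocomm_hopf_algebra_def)
  have unz: "u \<noteq> (\<lambda>k. 0)"
  proof
    assume "u = (\<lambda>k. 0)"
    then have "counit e u = 0" by (simp add: counit_def)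
    then show False using cu by simp
  qed
  interpret C: calg mu u by (rule calg.intro) (use Hax unz in auto)
  have frob: "hpow mu u (Sv i) p = lincomb n (\<lambda>m. \<Sum>l<n. B m l * s i l ^ p) t" if i: "i < n" for i
  proof -
    have "hpow mu u (Sv i) p = hpow mu u (\<lambda>k. \<Sum>l\<in>{..<n}. s i l * t l k) p"
      by (simp add: Sv_def lincomb_def)
    also have "\<dots> = (\<lambda>k. \<Sum>l\<in>{..<n}. s i l ^ p * hpow mu u (t l) p k)"
      by (rule C.frob_lincomb[OF pp p0])
    also have "\<dots> = (\<lambda>k. \<Sum>l<n. \<Sum>m<n. s i l ^ p * B m l * t m k)"
    proof (rule ext, rule sum.cong)
      fix k l assume "l \<in> {..<n}"
      then show "s i l ^ p * hpow mu u (t l) p k = (\<Sum>m<n. s i l ^ p * B m l * t m k)"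
        using B_assoc by (simp add: lincomb_def sum_distrib_left mult.assoc)
    qed simp
    also have "\<dots> = (\<lambda>k. \<Sum>m<n. \<Sum>l<n. s i l ^ p * B m l * t m k)"
      by (rule ext, rule sum.swap)
    also have "\<dots> = lincomb n (\<lambda>m. \<Sum>l<n. B m l * s i l ^ p) t"
    proof (rule ext)
      fix k
      show "(\<Sum>m<n. \<Sum>l<n. s i l ^ p * B m l * t m k) = lincomb n (\<lambda>m. \<Sum>l<n. B m l * s i l ^ p) t k"
        unfolding lincomb_def by (rule sum.cong) (simp_all add: sum_distrib_left sum_distrib_right mult_ac)
    qed
    finally show ?thesis .
  qed
  have hpowH0: "x \<in> H0 \<Longrightarrow> hpow mu u x m \<in> H0" for x m
    by (induction m) (auto simp: uH0 mulH0)
  have Aex: "\<exists>c. (\<forall>l<n. c l \<in> ?R) \<and> hpow mu u (Sv i) p = lincomb n c Sv" if i: "i < n" for i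
  proof -
    have "hpow mu u (Sv i) p \<in> H0" using hpowH0 SvH0 i by blast
    moreover have "hpow mu u (Sv i) p \<in> Prim D u" using frob[OF i] Prim_eq by blast
    ultimately show ?thesis using B3 by blast
  qed
  define Af where "Af = (\<lambda>i. SOME c. (\<forall>l<n. c l \<in> ?R) \<and> hpow mu u (Sv i) p = lincomb n c Sv)"
  have Af: "\<forall>i<n. (\<forall>l<n. Af i l \<in> ?R) \<and> hpow mu u (Sv i) p = lincomb n (Af i) Sv"
    unfolding Af_def using someI_ex[OF Aex] by blast
  define A where "A = (\<lambda>j i. Af i j)"
  define \<Theta> where "\<Theta> = (\<lambda>i j. s j i)"
  have eqn: "(\<Sum>k<n. \<Theta> i k * A k j) = (\<Sum>k<n. B i k * (\<Theta> k j) ^ p)" if "i < n" "j < n" for i j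
  proof -
    have "lincomb n (\<lambda>m. \<Sum>l<n. Af j l * s l m) t = lincomb n (\<lambda>m. \<Sum>l<n. B m l * s j l ^ p) t"
      using Af frob that comb by metis
    then have "(\<Sum>l<n. Af j l * s l i) = (\<Sum>l<n. B i l * s j l ^ p)" using Tinj that by blast
    then show ?thesis by (simp add: \<Theta>_def A_def mult.commute)
  qed
  define Psi where "Psi = (\<lambda>k m. (SOME r. \<forall>i<n. (if i = m then 1 else 0) = (\<Sum>l<n. r l * s l i)) k)"
  have Psi: "\<forall>i<n. (if i = m then 1 else 0) = (\<Sum>l<n. Psi l m * s l i)" for m
  proof -
    have "\<exists>r. \<forall>i<n. (if i = m then 1 else 0) = (\<Sum>l<n. r l * s l i)"
      using spanK[of "\<lambda>i. if i = m then 1 else 0"] by simp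
    then show ?thesis unfolding Psi_def by (rule someI_ex)
  qed
  have inv1: "(\<Sum>k<n. \<Theta> i k * Psi k j) = (if i = j then 1 else 0)" if "i < n" "j < n" for i j
    using Psi[of j] that by (simp add: \<Theta>_def mult.commute)
  have inv2: "(\<Sum>k<n. Psi i k * \<Theta> k j) = (if i = j then 1 else 0)" if ij: "i < n" "j < n" for i j
  proof -
    define c where "c = (\<lambda>i. (\<Sum>k<n. Psi i k * s j k) - (if i = j then 1 else 0))"
    have "(\<Sum>i<n. c i * s i m) = 0" if m: "m < n" for m
    proof -
      have "(\<Sum>i<n. c i * s i m) = (\<Sum>i<n. \<Sum>k<n. s j k * (Psi i k * s i m)) - (\<Sum>i<n. (if i = j then 1 else 0) * s i m)"
        by (simp add: c_def algebra_simps sum_subtractf sum_distrib_right sum_distrib_left)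
      also have "(\<Sum>i<n. \<Sum>k<n. s j k * (Psi i k * s i m)) = (\<Sum>k<n. s j k * (\<Sum>i<n. Psi i k * s i m))"
        by (subst sum.swap) (simp add: sum_distrib_left)
      also have "\<dots> = (\<Sum>k<n. s j k * (if m = k then 1 else 0))"
        using Psi m by (intro sum.cong) auto
      also have "\<dots> = s j m" using m by (simp add: if_distrib cong: if_cong)
      also have "(\<Sum>i<n. (if i = j then 1 else 0) * s i m) = (\<Sum>i<n. if i = j then s j m else 0)"
        by (rule sum.cong) auto
      also have "\<dots> = s j m" using ij by simp
      finally show ?thesis by simp
    qed
    then have "\<forall>l<n. c l = 0" using tri_indep[OF low diag] by blast
    then show ?thesis using ij by (simp add: c_def \<Theta>_def)
  qed
  show ?thesis
  proof (rule exI[of _ Sv], rule exI[of _ A], rule exI[of _ \<Theta>], intro conjI)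
    show "is_basis_over ?R n Sv (H0 \<inter> Prim D u)" by (rule basis)
    show "\<forall>i<n. hpow mu u (Sv i) p = lincomb n (\<lambda>j. A j i) Sv" using Af by (simp add: A_def)
    show "\<forall>i<n. \<forall>j<n. A i j \<in> ?R" using Af by (simp add: A_def)
    show "\<exists>\<Psi>. \<forall>i<n. \<forall>j<n. (\<Sum>k<n. \<Theta> i k * \<Psi> k j) = (if i = j then 1 else 0) \<and>
        (\<Sum>k<n. \<Psi> i k * \<Theta> k j) = (if i = j then 1 else 0)"
      using inv1 inv2 by blast
    show "\<forall>i<n. \<forall>j<n. i < j \<longrightarrow> \<Theta> i j = 0" using low by (simp add: \<Theta>_def)
    show "\<forall>i<n. \<forall>j\<le>i. \<Theta> i j \<noteq> 0 \<longrightarrow> v (\<Theta> i j) \<le> v (\<Theta> i i)"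
    proof (intro allI impI)
      fix i j assume i: "i < n" and ji: "j \<le> i" and nz: "\<Theta> i j \<noteq> 0"
      show "v (\<Theta> i j) \<le> v (\<Theta> i i)"
      proof (cases "j = i")
        case False
        then have ji': "j < i" "j < n" using ji i by auto
        have "s j i \<noteq> 0" using nz by (simp add: \<Theta>_def)
        then have "v (s j i) < a i" using red3 ji' i by blast
        then show ?thesis using sdiag pia i by (simp add: \<Theta>_def)
      qed simp
    qed
    show "\<forall>i<n. \<Theta> i i = \<pi> powi v (\<Theta> i i)" using sdiag pia by (simp add: \<Theta>_def)
    show "\<forall>i<n. \<forall>j<n. (\<Sum>k<n. \<Theta> i k * A k j) = (\<Sum>k<n. B i k * (\<Theta> k j) ^ p)" using eqn by blast
  qed
qed


end
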